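(* (1) For every gauge function $f$ there is an increasing $g\in\omega^\omega$ such that $\mathcal{I}_g\subseteq\mathcal{N}^f$. (2) For every increasing $g\in\omega^\omega$ there is a gauge function $f$ such that $\mathcal{N}^f\subseteq\mathcal{I}_g$.
   Context: $2^\omega$ carries the metric $d(x,y)=2^{-\min\{n:x(n)\neq y(n)\}}$ for $x\neq y$ and $d(x,x)=0$. A gauge function is a nondecreasing $f\colon[0,\infty)\to[0,\infty)$ with $f(0)=0$, $\lim_{x\to0}f(x)=0$; $\mathcal{H}^f(A)=\lim_{\delta\to0}\inf\{\sum_nf(\operatorname{diam}C_n):A\subseteq\bigcup_nC_n,\ \operatorname{diam}C_n\le\delta\}$ and $\mathcal{N}^f=\{A\subseteq2^\omega:\mathcal{H}^f(A)=0\}$. For $\sigma\in(2^{<\omega})^\omega$, $(\operatorname{ht}\sigma)(n)=|\sigma(n)|$ and $[\sigma]_\infty=\{x\in2^\omega:\exists^\infty n\ \sigma(n)\subseteq x\}$; for $g\in\omega^\omega$, $\mathcal{J}_g=\{A\subseteq2^\omega:\exists\sigma\in(2^{<\omega})^\omega\,(\operatorname{ht}\sigma=g\wedge A\subseteq[\sigma]_\infty)\}$. For $f,g\in\omega^\omega$, $f\ll g$ iff for every $k$, $f(n^k)\le g(n)$ for all but finitely many $n$. For increasing $f\in\omega^\omega$, the Yorioka ideal is $\mathcal{I}_f=\bigcup_{g\gg f}\mathcal{J}_g$. *)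

theory Defs
  imports "HOL-Analysis.Analysis"
begin

type_synonym cantor = "nat \<Rightarrow> bool"

definition cdist :: "cantor \<Rightarrow> cantor \<Rightarrow> real" where
  "cdist x y = (if x = y then 0 else (1/2) ^ (LEAST n. x n \<noteq> y n))"

definition cdiam :: "cantor set \<Rightarrow> real" where
  "cdiam C = (if C = {} then 0 else (SUP p\<in>C \<times> C. cdist (fst p) (snd p)))"

definition gauge :: "(real \<Rightarrow> real) \<Rightarrow> bool" where
  "gauge f \<longleftrightarrow> mono_on {0..} f \<and> (\<forall>x\<ge>0. f x \<ge> 0) \<and> f 0 = 0
      \<and> (f \<longlongrightarrow> 0) (at_right 0)"

definition hausdorff_delta :: "(real \<Rightarrow> real) \<Rightarrow> real \<Rightarrow> cantor set \<Rightarrow> ennreal" where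
  "hausdorff_delta f \<delta> A =
     (INF C \<in> {C :: nat \<Rightarrow> cantor set. A \<subseteq> (\<Union>n. C n) \<and> (\<forall>n. cdiam (C n) \<le> \<delta>)}.
        (\<Sum>n. ennreal (f (cdiam (C n)))))"

text \<open>The limit as delta -> 0+ of a quantity nonincreasing in delta is its supremum.\<close>
definition hausdorff :: "(real \<Rightarrow> real) \<Rightarrow> cantor set \<Rightarrow> ennreal" where
  "hausdorff f A = (SUP \<delta>\<in>{0<..}. hausdorff_delta f \<delta> A)"

definition null_f :: "(real \<Rightarrow> real) \<Rightarrow> cantor set set" where
  "null_f f = {A. hausdorff f A = 0}"

definition prefix_of :: "bool list \<Rightarrow> cantor \<Rightarrow> bool" where
  "prefix_of s x \<longleftrightarrow> (\<forall>i<length s. x i = s ! i)"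

definition inf_often_set :: "(nat \<Rightarrow> bool list) \<Rightarrow> cantor set" where
  "inf_often_set \<sigma> = {x. \<exists>\<^sub>\<infinity>n. prefix_of (\<sigma> n) x}"

definition J_ideal :: "(nat \<Rightarrow> nat) \<Rightarrow> cantor set set" where
  "J_ideal g = {A. \<exists>\<sigma>. (\<forall>n. length (\<sigma> n) = g n) \<and> A \<subseteq> inf_often_set \<sigma>}"

definition ll :: "(nat \<Rightarrow> nat) \<Rightarrow> (nat \<Rightarrow> nat) \<Rightarrow> bool" where
  "ll f g \<longleftrightarrow> (\<forall>k. \<forall>\<^sub>F n in sequentially. f (n ^ k) \<le> g n)"

definition yorioka :: "(nat \<Rightarrow> nat) \<Rightarrow> cantor set set" where
  "yorioka f = (\<Union>g\<in>{g. ll f g}. J_ideal g)"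

end

theory Submission
  imports Defs "HOL-Library.Nat_Bijection"
begin


lemma cdist_le1: "cdist x y \<le> 1"
  by (simp add: cdist_def power_le_one)

lemma cdist_nonneg: "0 \<le> cdist x y"
  by (simp add: cdist_def)

lemma cdist_pos: "x \<noteq> y \<Longrightarrow> 0 < cdist x y"
  by (simp add: cdist_def)

lemma cdist_le_cdiam: "x \<in> C \<Longrightarrow> y \<in> C \<Longrightarrow> cdist x y \<le> cdiam C"
proof -
  assume a: "x \<in> C" "y \<in> C"
  have "bdd_above ((\<lambda>p. cdist (fst p) (snd p)) ` (C \<times> C))"
    by (rule bdd_aboveI[of _ 1]) (auto simp: cdist_le1)
  then have "cdist (fst (x,y)) (snd (x,y)) \<le> (SUP p\<in>C \<times> C. cdist (fst p) (snd p))"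
    by (rule cSUP_upper[rotated]) (use a in auto)
  then show ?thesis using a by (auto simp: cdiam_def)
qed

lemma cdiam_nonneg: "0 \<le> cdiam C"
proof (cases "C = {}")
  case True then show ?thesis by (simp add: cdiam_def)
next
  case False then obtain x where "x \<in> C" by blast
  then show ?thesis using cdist_le_cdiam[of x C x] cdist_nonneg[of x x] by linarith
qed

lemma cdiam_zero_eq: "cdiam C \<le> 0 \<Longrightarrow> x \<in> C \<Longrightarrow> y \<in> C \<Longrightarrow> x = y"
  using cdist_le_cdiam[of x C y] cdist_pos[of x y] by force

definition cyl :: "bool list \<Rightarrow> cantor set" where "cyl s = {x. prefix_of s x}"

lemma cdist_agree: assumes "\<forall>i<m. x i = y i" shows "cdist x y \<le> (1/2)^m"
proof (cases "x = y")
  case True then show ?thesis by (simp add: cdist_def)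
next
  case False
  then obtain n where n: "x n \<noteq> y n" by blast
  have "m \<le> (LEAST n. x n \<noteq> y n)"
  proof (rule ccontr)
    assume "\<not> ?thesis"
    then have "x (LEAST n. x n \<noteq> y n) = y (LEAST n. x n \<noteq> y n)" using assms by auto
    moreover have "x (LEAST n. x n \<noteq> y n) \<noteq> y (LEAST n. x n \<noteq> y n)" by (rule LeastI[of _ n]) (rule n)
    ultimately show False by simp
  qed
  then show ?thesis using False by (simp add: cdist_def power_decreasing)
qed

lemma cdiam_cyl: "cdiam (cyl s) \<le> (1/2)^length s"
proof (cases "cyl s = {}")
  case True then show ?thesis by (simp add: cdiam_def)
next
  case False
  have "(SUP p\<in>cyl s \<times> cyl s. cdist (fst p) (snd p)) \<le> (1/2)^length s"
  proof (rule cSUP_least)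
    show "cyl s \<times> cyl s \<noteq> {}" using False by auto
    fix p assume "p \<in> cyl s \<times> cyl s"
    then show "cdist (fst p) (snd p) \<le> (1/2)^length s"
      by (intro cdist_agree) (auto simp: cyl_def prefix_of_def)
  qed
  then show ?thesis using False by (simp add: cdiam_def)
qed

lemma agree_below_lvl:
  assumes "x \<in> C" "y \<in> C" "0 < cdiam C" "i < (LEAST n. (1/2::real)^n \<le> cdiam C)"
  shows "x i = y i"
proof (rule ccontr)
  assume ne: "x i \<noteq> y i"
  then have xy: "x \<noteq> y" by auto
  define L where "L = (LEAST n. x n \<noteq> y n)"
  have "L \<le> i" unfolding L_def by (rule Least_le) (rule ne)
  then have "L < (LEAST n. (1/2::real)^n \<le> cdiam C)" using assms(4) by simp
  then have "\<not> (1/2::real)^L \<le> cdiam C" by (rule not_less_Least)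
  moreover have "cdist x y = (1/2)^L" using xy by (simp add: cdist_def L_def)
  ultimately show False using cdist_le_cdiam[OF assms(1,2)] by simp
qed

lemma exists_pow_le: "0 < (d::real) \<Longrightarrow> \<exists>n. (1/2::real)^n \<le> d"
  using real_arch_pow_inv[of d "1/2"] by (auto intro: less_imp_le)


lemma gauge_mono_pow: "gauge f \<Longrightarrow> b \<le> a \<Longrightarrow> f ((1/2)^a) \<le> f ((1/2)^b)"
proof -
  assume g: "gauge f" and ba: "b \<le> a"
  have m: "mono_on {0..} f" using g by (simp add: gauge_def)
  have "(1/2::real)^a \<le> (1/2)^b" using ba by (rule power_decreasing) simp_all
  then show ?thesis by (intro mono_onD[OF m]) simp_all
qed

lemma geom_tail: "(\<Sum>i. (1/2::real)^(i+N)) = 2 * (1/2)^N"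
proof -
  have "(\<Sum>i. (1/2::real)^(i+N)) = (\<Sum>i. (1/2)^N * (1/2::real)^i)"
    by (simp add: power_add mult.commute)
  also have "\<dots> = (1/2)^N * (\<Sum>i. (1/2::real)^i)"
    by (rule suminf_mult) simp
  also have "\<dots> = 2 * (1/2)^N" by (simp add: suminf_geometric)
  finally show ?thesis .
qed

lemma hausdorff_zeroI: "(\<And>\<delta>. 0 < \<delta> \<Longrightarrow> hausdorff_delta f \<delta> A = 0) \<Longrightarrow> A \<in> null_f f"
  unfolding null_f_def hausdorff_def by simp

lemma part1:
  assumes gf: "gauge f"
  shows "\<exists>g. strict_mono g \<and> yorioka g \<subseteq> null_f f"
proof -
  have "\<exists>N. f ((1/2)^N) \<le> (1/2)^n" for n
  proof -
    have "(f \<longlongrightarrow> 0) (at_right 0)" using gf by (simp add: gauge_def)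
    then have "eventually (\<lambda>x. dist (f x) 0 < (1/2)^n) (at_right (0::real))"
      by (rule tendstoD) simp
    then obtain b where b: "b > 0" "\<And>y. y > 0 \<Longrightarrow> y < b \<Longrightarrow> dist (f y) 0 < (1/2)^n"
      unfolding eventually_at_right_field by auto
    obtain N where "(1/2::real)^N < b" using real_arch_pow_inv[of b "1/2"] b by auto
    from b(2)[OF _ this] show ?thesis by (auto intro!: exI[of _ N])
  qed
  then have "\<forall>n. \<exists>N. f ((1/2)^N) \<le> (1/2)^n" by blast
  then have "\<exists>Nf. \<forall>n. f ((1/2)^(Nf n)) \<le> (1/2)^n" by (rule choice)
  then obtain Nf where Nf: "\<And>n. f ((1/2)^(Nf n)) \<le> (1/2)^n" by blast
  define g where "g = rec_nat (Nf 0) (\<lambda>n r. max (Suc r) (Nf (Suc n)))"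
  have gS: "g (Suc n) = max (Suc (g n)) (Nf (Suc n))" for n by (simp add: g_def)
  have sm: "strict_mono g" by (rule strict_mono_Suc_iff[THEN iffD2]) (simp add: gS less_max_iff_disj)
  have gN: "Nf n \<le> g n" for n
  proof (cases n)
    case 0 then show ?thesis by (simp add: g_def)
  next
    case (Suc k) then show ?thesis by (simp add: gS)
  qed
  have fg: "f ((1/2)^(g n)) \<le> (1/2)^n" for n
    using gauge_mono_pow[OF gf gN[of n]] Nf[of n] by linarith
  have "yorioka g \<subseteq> null_f f"
  proof
    fix A assume "A \<in> yorioka g"
    then obtain h \<sigma> where hl: "ll g h" and len: "\<And>n. length (\<sigma> n) = h n"
      and As: "A \<subseteq> inf_often_set \<sigma>"
      unfolding yorioka_def J_ideal_def by auto
    from hl have "\<forall>\<^sub>F n in sequentially. g (n^1) \<le> h n" unfolding ll_def by blast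
    then obtain N1 where N1: "\<And>n. n \<ge> N1 \<Longrightarrow> g n \<le> h n"
      unfolding eventually_sequentially by auto
    show "A \<in> null_f f"
    proof (rule hausdorff_zeroI)
      fix \<delta>::real assume d: "0 < \<delta>"
      have "hausdorff_delta f \<delta> A \<le> 0"
      proof (rule ennreal_le_epsilon)
        fix e::real assume e: "0 < e"
        obtain n where n: "(1/2::real)^n < min \<delta> (e/2)"
          using real_arch_pow_inv[of "min \<delta> (e/2)" "1/2"] d e by auto
        define N where "N = max n N1"
        have pN: "(1/2::real)^N \<le> (1/2)^n" unfolding N_def by (rule power_decreasing) auto
        define C where "C i = cyl (\<sigma> (i+N))" for i
        have cov: "A \<subseteq> (\<Union>i. C i)"
        proof
          fix x assume "x \<in> A"
          then have "\<exists>\<^sub>\<infinity>m. prefix_of (\<sigma> m) x" using As by (auto simp: inf_often_set_def)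
          then obtain m where "m \<ge> N" "prefix_of (\<sigma> m) x" unfolding INFM_nat_le by blast
          then have "x \<in> C (m - N)" by (simp add: C_def cyl_def)
          then show "x \<in> (\<Union>i. C i)" by blast
        qed
        have dC: "cdiam (C i) \<le> (1/2)^(g (i+N))" for i
        proof -
          have "cdiam (C i) \<le> (1/2)^(h (i+N))" using cdiam_cyl[of "\<sigma> (i+N)"] by (simp add: C_def len)
          also have "\<dots> \<le> (1/2)^(g (i+N))" by (rule power_decreasing) (auto simp: N_def intro!: N1)
          finally show ?thesis .
        qed
        have dC2: "cdiam (C i) \<le> \<delta>" for i
        proof -
          have "(1/2::real)^(g (i+N)) \<le> (1/2)^N"
            using strict_mono_imp_increasing[OF sm, of "i+N"] by (intro power_decreasing) auto
          then show ?thesis using dC[of i] pN n by linarith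
        qed
        have fC: "f (cdiam (C i)) \<le> (1/2)^(i+N)" for i
        proof -
          have "f (cdiam (C i)) \<le> f ((1/2)^(g (i+N)))"
          proof (rule mono_onD[of "{0..}" f])
            show "mono_on {0..} f" using gf by (simp add: gauge_def)
          qed (use dC[of i] cdiam_nonneg[of "C i"] in auto)
          then show ?thesis using fg[of "i+N"] by linarith
        qed
        have "hausdorff_delta f \<delta> A \<le> (\<Sum>i. ennreal (f (cdiam (C i))))"
          unfolding hausdorff_delta_def by (rule INF_lower) (use cov dC2 in auto)
        also have "\<dots> \<le> (\<Sum>i. ennreal ((1/2)^(i+N)))"
          proof (rule suminf_le)
          show "ennreal (f (cdiam (C i))) \<le> ennreal ((1/2)^(i+N))" for i by (rule ennreal_leI) (rule fC)
        qed simp_all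
        also have "\<dots> = ennreal (2 * (1/2)^N)"
        proof -
          have "summable (\<lambda>i. (1/2::real)^(i+N))"
            by (subst summable_iff_shift) simp
          then show ?thesis by (subst suminf_ennreal2) (simp_all add: geom_tail)
        qed
        also have "\<dots> \<le> ennreal e" using pN n by (intro ennreal_leI) linarith
        finally show "hausdorff_delta f \<delta> A \<le> 0 + ennreal e" by simp
      qed
      then show "hausdorff_delta f \<delta> A = 0" by simp
    qed
  qed
  with sm show ?thesis by blast
qed



lemma nn_mono: "(a::nat) \<le> b \<Longrightarrow> a^a \<le> b^b"
proof (cases "a = 0")
  case True
  then show ?thesis by (cases "b = 0") auto
next
  case False
  assume ab: "a \<le> b"
  have "a^a \<le> b^a" using ab by (rule power_mono) simp
  also have "\<dots> \<le> b^b" using ab False by (intro power_increasing) auto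
  finally show ?thesis .
qed

lemma n_le_nn: "(n::nat) \<le> n^n"
  by (cases "n = 0") (auto intro: self_le_power)

lemma two_pe_le: "2 * prod_encode (a, b) \<le> (a + b + 2)^2"
proof -
  have "2 * ((a+b) * Suc (a+b) div 2) \<le> (a+b) * Suc (a+b)" by simp
  then show ?thesis unfolding prod_encode_def triangle_def
    by (simp add: power2_eq_square algebra_simps)
qed

lemma lv_le_self: "0 < x \<Longrightarrow> (1/2::real)^(LEAST n. (1/2::real)^n \<le> x) \<le> x"
  using exists_pow_le[of x] by (auto intro: LeastI_ex)

lemma lv_anti: "0 < x \<Longrightarrow> x \<le> y \<Longrightarrow> (LEAST n. (1/2::real)^n \<le> y) \<le> (LEAST n. (1/2::real)^n \<le> x)"
  using lv_le_self[of x] by (intro Least_le) simp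

lemma lv_big: "0 < x \<Longrightarrow> x < (1/2)^M \<Longrightarrow> M < (LEAST n. (1/2::real)^n \<le> x)"
proof (rule ccontr)
  assume x: "0 < x" "x < (1/2)^M" and "\<not> M < (LEAST n. (1/2::real)^n \<le> x)"
  then have "(1/2::real)^M \<le> (1/2)^(LEAST n. (1/2::real)^n \<le> x)"
    by (intro power_decreasing) auto
  with lv_le_self[OF x(1)] x(2) show False by simp
qed


definition hh :: "(nat \<Rightarrow> nat) \<Rightarrow> nat \<Rightarrow> nat" where "hh g n = g (n^n)"
definition RR :: "(nat \<Rightarrow> nat) \<Rightarrow> nat \<Rightarrow> nat" where "RR g m = card {n. hh g n \<le> m}"
definition FF :: "(nat \<Rightarrow> nat) \<Rightarrow> nat \<Rightarrow> real" where "FF g m = 3 / sqrt (real (RR g m) + 1)"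
definition lvl :: "real \<Rightarrow> nat" where "lvl x = (LEAST n. (1/2::real)^n \<le> x)"
definition ff :: "(nat \<Rightarrow> nat) \<Rightarrow> real \<Rightarrow> real" where "ff g x = (if x \<le> 0 then 0 else FF g (lvl x))"

lemma hh_mono: "strict_mono g \<Longrightarrow> a \<le> b \<Longrightarrow> hh g a \<le> hh g b"
  unfolding hh_def by (rule strict_mono_mono[THEN monoD]) (assumption, rule nn_mono)

lemma hh_ge: "strict_mono g \<Longrightarrow> n \<le> hh g n"
  unfolding hh_def using n_le_nn[of n] strict_mono_imp_increasing[of g "n^n"] by linarith

lemma RR_fin: assumes g: "strict_mono g" shows "finite {n. hh g n \<le> m}"
proof (rule finite_subset[of _ "{..m}"])
  show "{n. hh g n \<le> m} \<subseteq> {..m}"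
  proof
    fix n assume "n \<in> {n. hh g n \<le> m}"
    then show "n \<in> {..m}" using hh_ge[OF g, of n] by simp
  qed
qed simp

lemma RR_mono: "strict_mono g \<Longrightarrow> m \<le> m' \<Longrightarrow> RR g m \<le> RR g m'"
  unfolding RR_def by (rule card_mono[OF RR_fin]) auto

lemma RR_big: "strict_mono g \<Longrightarrow> Suc N \<le> RR g (hh g N)"
proof -
  assume g: "strict_mono g"
  have "card {..N} \<le> RR g (hh g N)" unfolding RR_def
  proof (rule card_mono[OF RR_fin[OF g]])
    show "{..N} \<subseteq> {n. hh g n \<le> hh g N}" using hh_mono[OF g] by blast
  qed
  then show ?thesis by simp
qed

lemma RR_h: "strict_mono g \<Longrightarrow> p < RR g m \<Longrightarrow> hh g p \<le> m"
proof (rule ccontr)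
  assume g: "strict_mono g" and p: "p < RR g m" and "\<not> hh g p \<le> m"
  then have "{n. hh g n \<le> m} \<subseteq> {..<p}"
  proof -
    assume hp: "\<not> hh g p \<le> m"
    show ?thesis
    proof
      fix n assume "n \<in> {n. hh g n \<le> m}"
      then have hn: "hh g n \<le> m" by simp
      show "n \<in> {..<p}"
      proof (rule ccontr)
        assume "n \<notin> {..<p}"
        then have "p \<le> n" by simp
        then have "hh g p \<le> hh g n" by (rule hh_mono[OF g])
        with hn hp show False by simp
      qed
    qed
  qed
  then have "RR g m \<le> p" unfolding RR_def by (metis card_lessThan card_mono finite_lessThan)
  with p show False by simp
qed

lemma FF_pos: "0 < FF g m"
  unfolding FF_def by simp

lemma FF_anti: "strict_mono g \<Longrightarrow> m \<le> m' \<Longrightarrow> FF g m' \<le> FF g m"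
  unfolding FF_def using RR_mono[of g m m']
  by (intro divide_left_mono) auto

lemma FF_lim: "strict_mono g \<Longrightarrow> 0 < e \<Longrightarrow> \<exists>M. \<forall>m\<ge>M. FF g m < e"
proof -
  assume g: "strict_mono g" and e: "0 < e"
  obtain N::nat where N: "9 / e^2 < real N" using reals_Archimedean2 by blast
  show ?thesis
  proof (intro exI allI impI)
    fix m assume "hh g N \<le> m"
    then have "Suc N \<le> RR g m" using RR_big[OF g, of N] RR_mono[OF g] le_trans by blast
    then have "real (Suc N) \<le> real (RR g m)" by linarith
    moreover have "(3/e)^2 = 9 / e^2" by (simp add: power_divide)
    ultimately have "(3/e)^2 < real (RR g m) + 1" using N by linarith
    then have "3/e < sqrt (real (RR g m) + 1)" by (rule real_less_rsqrt)
    then have "3 < e * sqrt (real (RR g m) + 1)" using e by (simp add: divide_less_eq mult.commute)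
    then show "FF g m < e" unfolding FF_def by (simp add: divide_less_eq)
  qed
qed

lemma gauge_ff: "strict_mono g \<Longrightarrow> gauge (ff g)"
proof -
  assume g: "strict_mono g"
  have nn: "0 \<le> ff g x" for x unfolding ff_def using FF_pos[of g] by (simp add: less_imp_le)
  have mono: "mono_on {0..} (ff g)"
  proof (rule mono_onI)
    fix x y :: real assume "x \<in> {0..}" "y \<in> {0..}" "x \<le> y"
    then show "ff g x \<le> ff g y"
    proof (cases "x \<le> 0")
      case True then show ?thesis using nn[of y] by (simp add: ff_def)
    next
      case False
      with \<open>x \<le> y\<close> have "0 < x" "0 < y" by auto
      then show ?thesis
      proof -
        have "lvl y \<le> lvl x" unfolding lvl_def by (rule lv_anti) fact+
        then have "FF g (lvl x) \<le> FF g (lvl y)" by (rule FF_anti[OF g])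
        then show ?thesis using \<open>0 < x\<close> \<open>0 < y\<close> by (simp add: ff_def)
      qed
    qed
  qed
  have lim: "(ff g \<longlongrightarrow> 0) (at_right 0)"
  proof (rule tendstoI)
    fix e :: real assume e: "0 < e"
    obtain M where M: "\<And>m. m \<ge> M \<Longrightarrow> FF g m < e" using FF_lim[OF g e] by blast
    show "eventually (\<lambda>x. dist (ff g x) 0 < e) (at_right 0)"
      unfolding eventually_at_right_field
    proof (intro exI[of _ "(1/2)^M"] conjI allI impI)
      fix y :: real assume "0 < y" "y < (1/2)^M"
      then have "M < lvl y" unfolding lvl_def by (rule lv_big)
      then show "dist (ff g y) 0 < e" using \<open>0 < y\<close> M[of "lvl y"] FF_pos[of g "lvl y"]
        by (simp add: ff_def)
    qed simp
  qed
  have "\<forall>x\<ge>0. ff g x \<ge> 0" using nn by simp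
  moreover have "ff g 0 = 0" by (simp add: ff_def)
  ultimately show ?thesis unfolding gauge_def using mono lim by blast
qed


lemma pos_bound:
  fixes g :: "nat \<Rightarrow> nat" and k j m :: nat
  assumes g: "strict_mono g" and a: "real (Suc j) * FF g m < 1 / real (Suc k)"
  shows "hh g (2 * prod_encode (k, j)) \<le> m"
proof -
  define F where "F = FF g m"
  have Fp: "0 < F" unfolding F_def by (rule FF_pos)
  have a1: "real (Suc j) * F < 1"
  proof -
    have "1 / real (Suc k) \<le> 1" by simp
    then show ?thesis using a unfolding F_def by linarith
  qed
  have "F \<le> real (Suc j) * F" using Fp by simp
  then have "F < 1 / real (Suc k)" using a unfolding F_def by linarith
  then have b1: "real (Suc k) * F < 1" by (simp add: less_divide_eq mult.commute)
  have "real (k+j+2) * F = real (Suc j) * F + real (Suc k) * F" by (simp add: algebra_simps)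
  then have c: "real (k+j+2) * F < 2" using a1 b1 by linarith
  have c0: "0 \<le> real (k+j+2) * F" using Fp by simp
  have "(real (k+j+2) * F)^2 < 2^2" using c c0 by (intro power_strict_mono) auto
  moreover have "F^2 = 9 / (real (RR g m) + 1)" unfolding F_def FF_def
    by (simp add: power_divide)
  ultimately have "real (k+j+2)^2 * (9 / (real (RR g m) + 1)) < 4"
    by (simp add: power_mult_distrib)
  then have "real (k+j+2)^2 * 9 / (real (RR g m) + 1) < 4" by simp
  then have d: "real (k+j+2)^2 * 9 < 4 * (real (RR g m) + 1)"
    by (simp add: pos_divide_less_eq add_pos_nonneg)
  have R1: "RR g m \<noteq> 0"
  proof
    assume "RR g m = 0"
    then have "F = 3" unfolding F_def FF_def by simp
    with b1 show False by simp
  qed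
  have p: "real (2 * prod_encode (k, j)) \<le> real (k+j+2)^2"
    using two_pe_le[of k j] by (metis of_nat_le_iff of_nat_power)
  have R1': "1 \<le> real (RR g m)" using R1 by simp
  have "real (2 * prod_encode (k, j)) < real (RR g m)" 
  proof -
    define X where "X = real (k+j+2)^2"
    define P where "P = real (2 * prod_encode (k, j))"
    define R where "R = real (RR g m)"
    have "X * 9 < 4 * (R + 1)" "P \<le> X" "1 \<le> R" "0 \<le> P"
      using d p R1' unfolding X_def P_def R_def by simp_all
    then have "P < R" by argo
    then show ?thesis unfolding P_def R_def .
  qed
  then have "2 * prod_encode (k, j) < RR g m" by (simp only: of_nat_less_iff)
  then show ?thesis by (rule RR_h[OF g])
qed


lemma ll_hh: "strict_mono g \<Longrightarrow> ll g (hh g)"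
  unfolding ll_def
proof
  fix k assume g: "strict_mono g"
  show "\<forall>\<^sub>F n in sequentially. g (n ^ k) \<le> hh g n"
    unfolding eventually_sequentially
  proof (intro exI allI impI)
    fix n assume n: "Suc k \<le> n"
    then have "n^k \<le> n^n" by (intro power_increasing) auto
    then show "g (n ^ k) \<le> hh g n" unfolding hh_def
      by (rule strict_mono_mono[OF g, THEN monoD])
  qed
qed

lemma part2:
  assumes g: "strict_mono g"
  shows "null_f (ff g) \<subseteq> yorioka g"
proof
  fix A assume "A \<in> null_f (ff g)"
  then have H: "hausdorff (ff g) A = 0" by (simp add: null_f_def)
  have "hausdorff_delta (ff g) 1 A \<le> hausdorff (ff g) A"
    unfolding hausdorff_def by (rule SUP_upper) simp
  with H have hd: "hausdorff_delta (ff g) 1 A = 0" by simp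
  have "\<forall>k. \<exists>C. A \<subseteq> (\<Union>i. C i) \<and> (\<Sum>i. ennreal (ff g (cdiam (C i)))) < ennreal (1 / real (Suc k))"
  proof
    fix k
    have "(INF C \<in> {C. A \<subseteq> (\<Union>n. C n) \<and> (\<forall>n. cdiam (C n) \<le> 1)}. (\<Sum>n. ennreal (ff g (cdiam (C n))))) < ennreal (1/real (Suc k))"
      using hd unfolding hausdorff_delta_def by simp
    then show "\<exists>C. A \<subseteq> (\<Union>i. C i) \<and> (\<Sum>i. ennreal (ff g (cdiam (C i)))) < ennreal (1 / real (Suc k))"
      unfolding INF_less_iff by blast
  qed
  then have "\<exists>Cov. \<forall>k. A \<subseteq> (\<Union>i. Cov k i) \<and> (\<Sum>i. ennreal (ff g (cdiam (Cov k i)))) < ennreal (1 / real (Suc k))"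
    by (rule choice)
  then obtain Cov where cov: "\<And>k. A \<subseteq> (\<Union>i. Cov k i)"
    and sm: "\<And>k. (\<Sum>i. ennreal (ff g (cdiam (Cov k i)))) < ennreal (1 / real (Suc k))" by blast
  define P where "P k i \<longleftrightarrow> 0 < cdiam (Cov k i)" for k i
  define lk where "lk k i = lvl (cdiam (Cov k i))" for k i
  define Sset where "Sset k m = {i. P k i \<and> lk k i \<le> m}" for k m
  define bef where "bef k i = {i'. P k i' \<and> (lk k i' < lk k i \<or> lk k i' = lk k i \<and> i' < i)}" for k i
  define rk where "rk k i = card (bef k i)" for k i
  have fval: "P k i \<Longrightarrow> ff g (cdiam (Cov k i)) = FF g (lk k i)" for k i
    by (simp add: P_def lk_def ff_def)
  have cnt: "real (card T) * FF g m < 1 / real (Suc k)" if T: "finite T" "T \<subseteq> Sset k m" for T k m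
  proof -
    have FFnn: "0 \<le> FF g m" using FF_pos[of g m] by simp
    have "ennreal (real (card T) * FF g m) = (\<Sum>i\<in>T. ennreal (FF g m))"
      by (subst sum_ennreal) (use FFnn in auto)
    also have "\<dots> \<le> (\<Sum>i\<in>T. ennreal (ff g (cdiam (Cov k i))))"
    proof (rule sum_mono)
      fix i assume "i \<in> T"
      then have "P k i" "lk k i \<le> m" using T by (auto simp: Sset_def)
      then show "ennreal (FF g m) \<le> ennreal (ff g (cdiam (Cov k i)))"
        using fval[of k i] FF_anti[OF g, of "lk k i" m] by (simp add: ennreal_leI)
    qed
    also have "\<dots> \<le> (\<Sum>i. ennreal (ff g (cdiam (Cov k i))))"
      by (rule sum_le_suminf) (simp_all add: T)
    also have "\<dots> < ennreal (1 / real (Suc k))" by (rule sm)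
    finally show ?thesis using FFnn by (simp add: ennreal_less_iff)
  qed
  have Sfin: "finite (Sset k m)" for k m
  proof (rule ccontr)
    assume inf: "infinite (Sset k m)"
    obtain N::nat where N: "1 / FF g m < real N" using reals_Archimedean2 by blast
    obtain T where T: "finite T" "card T = N" "T \<subseteq> Sset k m"
      using infinite_arbitrarily_large[OF inf] by blast
    have "real N * FF g m < 1 / real (Suc k)" using cnt[OF T(1) T(3)] T(2) by simp
    moreover have "1 \<le> real N * FF g m" using N FF_pos[of g m] by (simp add: divide_less_eq)
    moreover have "1 / real (Suc k) \<le> 1" by simp
    ultimately show False by linarith
  qed
  have Scnt: "real (card (Sset k m)) * FF g m < 1 / real (Suc k)" for k m
    using cnt[OF Sfin] by simp
  have bef_sub: "bef k i \<subset> Sset k (lk k i)" if "P k i" for k i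
    using that unfolding bef_def Sset_def by auto
  have bef_fin: "finite (bef k i)" if "P k i" for k i
    using bef_sub[OF that] Sfin by (meson finite_subset psubset_imp_subset)
  have rk_lt: "rk k i < card (Sset k (lk k i))" if "P k i" for k i
    unfolding rk_def by (rule psubset_card_mono[OF Sfin bef_sub[OF that]])
  have rk_less: "rk k i < rk k i'"
    if "P k i" "P k i'" "lk k i < lk k i' \<or> lk k i = lk k i' \<and> i < i'" for k i i'
  proof -
    have "insert i (bef k i) \<subseteq> bef k i'" using that unfolding bef_def by auto
    moreover have "i \<notin> bef k i" unfolding bef_def by auto
    ultimately have "card (insert i (bef k i)) \<le> card (bef k i')"
      by (intro card_mono bef_fin that(2))
    then show ?thesis unfolding rk_def using bef_fin[OF that(1)] \<open>i \<notin> bef k i\<close> by simp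
  qed
  have rk_inj: "i = i'" if "P k i" "P k i'" "rk k i = rk k i'" for k i i'
  proof (rule ccontr)
    assume "i \<noteq> i'"
    then have "(lk k i < lk k i' \<or> lk k i = lk k i' \<and> i < i') \<or> (lk k i' < lk k i \<or> lk k i' = lk k i \<and> i' < i)"
      by auto
    then show False using rk_less[OF that(1,2)] rk_less[OF that(2,1)] that(3) by auto
  qed
  have pos_h: "hh g (2 * prod_encode (k, rk k i)) \<le> lk k i" if "P k i" for k i
  proof (rule pos_bound[OF g])
    have "real (Suc (rk k i)) \<le> real (card (Sset k (lk k i)))" using rk_lt[OF that] by simp
    then have "real (Suc (rk k i)) * FF g (lk k i) \<le> real (card (Sset k (lk k i))) * FF g (lk k i)"
      using FF_pos[of g] by (intro mult_right_mono) (auto intro: less_imp_le)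
    then show "real (Suc (rk k i)) * FF g (lk k i) < 1 / real (Suc k)" using Scnt[of k "lk k i"] by linarith
  qed
  define pt where "pt p = (if even p then (let q = prod_decode (p div 2) in
      SOME y. y \<in> Cov (fst q) (SOME i. P (fst q) i \<and> rk (fst q) i = snd q))
    else (let q = prod_decode (fst (prod_decode (p div 2))) in SOME y. y \<in> Cov (fst q) (snd q)))" for p
  define \<sigma> where "\<sigma> p = map (pt p) [0..<hh g p]" for p
  have len: "length (\<sigma> p) = hh g p" for p by (simp add: \<sigma>_def)
  have pref: "prefix_of (\<sigma> p) x" if "\<And>i. i < hh g p \<Longrightarrow> x i = pt p i" for p x
    using that by (simp add: prefix_of_def \<sigma>_def)
  have sub: "A \<subseteq> inf_often_set \<sigma>"
  proof
    fix x assume xA: "x \<in> A"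
    define K where "K = {k. \<exists>i. x \<in> Cov k i \<and> P k i}"
    have "infinite {p. prefix_of (\<sigma> p) x}"
    proof (cases "finite K")
      case False
      define ik where "ik k = (SOME i. x \<in> Cov k i \<and> P k i)" for k
      have ik: "x \<in> Cov k (ik k) \<and> P k (ik k)" if "k \<in> K" for k
      proof -
        from that obtain i where "x \<in> Cov k i \<and> P k i" unfolding K_def by blast
        then show ?thesis unfolding ik_def by (rule someI)
      qed
      define ps where "ps k = 2 * prod_encode (k, rk k (ik k))" for k
      have inj: "inj_on ps K" unfolding ps_def by (rule inj_onI) simp
      have "ps ` K \<subseteq> {p. prefix_of (\<sigma> p) x}"
      proof
        fix p assume "p \<in> ps ` K"
        then obtain k where k: "k \<in> K" and p: "p = ps k" by blast
        define i where "i = ik k"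
        have xi: "x \<in> Cov k i" and Pi: "P k i" using ik[OF k] by (auto simp: i_def)
        have ieq: "(SOME i'. P k i' \<and> rk k i' = rk k i) = i"
        proof (rule someI2[of _ i])
          show "P k i \<and> rk k i = rk k i" using Pi by simp
          fix i' assume "P k i' \<and> rk k i' = rk k i"
          then show "i' = i" using rk_inj[of k i' i] Pi by blast
        qed
        have ptp: "pt p = (SOME y. y \<in> Cov k i)"
          unfolding pt_def p ps_def i_def[symmetric] using ieq by (simp add: Let_def)
        have yC: "pt p \<in> Cov k i" unfolding ptp using xi by (rule someI[where P="\<lambda>y. y \<in> Cov k i"])
        have hb: "hh g p \<le> lk k i" unfolding p ps_def i_def[symmetric] by (rule pos_h[OF Pi])
        show "p \<in> {p. prefix_of (\<sigma> p) x}"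
        proof (simp, rule pref)
          fix l assume "l < hh g p"
          then have "l < (LEAST n. (1/2::real)^n \<le> cdiam (Cov k i))"
            using hb unfolding lk_def lvl_def by simp
          then show "x l = pt p l" using agree_below_lvl[OF xi yC] Pi unfolding P_def by blast
        qed
      qed
      moreover have "infinite (ps ` K)" using False inj finite_imageD by blast
      ultimately show ?thesis using infinite_super by blast
    next
      case True
      obtain k where k: "k \<notin> K" using ex_new_if_finite[OF infinite_UNIV_nat True] by blast
      obtain i where xi: "x \<in> Cov k i" using cov[of k] xA by blast
      have nP: "\<not> P k i" using k xi unfolding K_def by blast
      then have d0: "cdiam (Cov k i) \<le> 0" unfolding P_def by simp
      define ps where "ps t = 2 * prod_encode (prod_encode (k, i), t) + 1" for t
      have inj: "inj ps" unfolding ps_def by (rule injI) simp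
      have "range ps \<subseteq> {p. prefix_of (\<sigma> p) x}"
      proof
        fix p assume "p \<in> range ps"
        then obtain t where p: "p = ps t" by blast
        have ptp: "pt p = (SOME y. y \<in> Cov k i)"
          unfolding pt_def p ps_def by (simp add: Let_def)
        have "pt p = x" unfolding ptp
          by (rule someI2[of _ x]) (use xi cdiam_zero_eq[OF d0] in auto)
        then show "p \<in> {p. prefix_of (\<sigma> p) x}" by (simp add: pref)
      qed
      moreover have "infinite (range ps)" using inj by (rule range_inj_infinite)
      ultimately show ?thesis using infinite_super by blast
    qed
    then show "x \<in> inf_often_set \<sigma>" by (simp add: inf_often_set_def Inf_many_def)
  qed
  show "A \<in> yorioka g" unfolding yorioka_def J_ideal_def
  proof (rule UN_I[of "hh g"])
    show "hh g \<in> {h. ll g h}" using ll_hh[OF g] by simp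
    show "A \<in> {A. \<exists>\<sigma>. (\<forall>n. length (\<sigma> n) = hh g n) \<and> A \<subseteq> inf_often_set \<sigma>}"
      using len sub by blast
  qed
qed

theorem corollary3p6:
  shows "(\<forall>f. gauge f \<longrightarrow> (\<exists>g. strict_mono g \<and> yorioka g \<subseteq> null_f f))
       \<and> (\<forall>g. strict_mono g \<longrightarrow> (\<exists>f. gauge f \<and> null_f f \<subseteq> yorioka g))"
  using part1 part2 gauge_ff by blast

end
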